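(* (1) In every model of $\mathsf{Md}_\bot$ satisfying $\mathsf{NVL}$: for all $x,y$, if $x\cdot y=\bot$ and $x\neq\bot$ then $y=\bot$. (2) In every model of $\mathsf{Md}_\bot$ satisfying $\mathsf{NVL}$: for all $x$, if $x^{-1}\neq\bot$ then $0\cdot x=0$. (3) Every model of $\mathsf{Md}_\bot$ satisfying $\mathsf{NVL}$ and $\mathsf{AVL}$ satisfies $\mathsf{CIL}$. (4) Every model of $\mathsf{Md}_\bot$ satisfying $\mathsf{CIL}$ satisfies $\mathsf{NVL}$. (5) Every model of $\mathsf{Md}_\bot$ satisfying $\mathsf{CIL}$ satisfies $\mathsf{AVL}$.
   Context: The signature has one sort, constants $0,1,\bot$, binary operations $+,\cdot$ and unary operations $-$ and $(\,\cdot\,)^{-1}$. $\mathsf{Md}_\bot$ is the set of equations (variables universally quantified): $(x+y)+z=x+(y+z)$; $x+y=y+x$; $x+0=x$; $x+(-x)=0\cdot x$; $(x\cdot y)\cdot z=x\cdot(y\cdot z)$; $x\cdot y=y\cdot x$; $1\cdot x=x$; $x\cdot(y+z)=x\cdot y+x\cdot z$; $-(-x)=x$; $0\cdot(x\cdot x)=0\cdot x$; $(x^{-1})^{-1}=x+0\cdot x^{-1}$; $x\cdot x^{-1}=1+0\cdot x^{-1}$; $(x\cdot y)^{-1}=x^{-1}\cdot y^{-1}$; $1^{-1}=1$; $0^{-1}=\bot$; $x+\bot=\bot$; $x\cdot\bot=\bot$. Normal Value Law $\mathsf{NVL}$: $\forall x\,(x\neq\bot\rightarrow 0\cdot x=0)$.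 Additional Value Law $\mathsf{AVL}$: $\forall x\,(x^{-1}=\bot\rightarrow 0\cdot x=x)$. Common Inverse Law $\mathsf{CIL}$: $\forall x\,(x\neq 0\wedge x\neq\bot\rightarrow x\cdot x^{-1}=1)$. *)

theory Defs
  imports Main
begin

text \<open>A structure of the signature (0, 1, bot, +, *, -, inverse) on a carrier type 'a
  is given by its operations. The model's domain is the whole type 'a.\<close>

definition Md_bot ::
  "'a \<Rightarrow> 'a \<Rightarrow> 'a \<Rightarrow> ('a \<Rightarrow> 'a \<Rightarrow> 'a) \<Rightarrow> ('a \<Rightarrow> 'a \<Rightarrow> 'a) \<Rightarrow> ('a \<Rightarrow> 'a) \<Rightarrow> ('a \<Rightarrow> 'a) \<Rightarrow> bool"
  where "Md_bot z e b ad mu ng iv \<longleftrightarrow>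
    (\<forall>x y w. ad (ad x y) w = ad x (ad y w)) \<and>
    (\<forall>x y. ad x y = ad y x) \<and>
    (\<forall>x. ad x z = x) \<and>
    (\<forall>x. ad x (ng x) = mu z x) \<and>
    (\<forall>x y w. mu (mu x y) w = mu x (mu y w)) \<and>
    (\<forall>x y. mu x y = mu y x) \<and>
    (\<forall>x. mu e x = x) \<and>
    (\<forall>x y w. mu x (ad y w) = ad (mu x y) (mu x w)) \<and>
    (\<forall>x. ng (ng x) = x) \<and>
    (\<forall>x. mu z (mu x x) = mu z x) \<and>
    (\<forall>x. iv (iv x) = ad x (mu z (iv x))) \<and>
    (\<forall>x. mu x (iv x) = ad e (mu z (iv x))) \<and>
    (\<forall>x y. iv (mu x y) = mu (iv x) (iv y)) \<and>
    iv e = e \<and>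
    iv z = b \<and>
    (\<forall>x. ad x b = b) \<and>
    (\<forall>x. mu x b = b)"

definition NVL :: "'a \<Rightarrow> 'a \<Rightarrow> ('a \<Rightarrow> 'a \<Rightarrow> 'a) \<Rightarrow> bool"
  where "NVL z b mu \<longleftrightarrow> (\<forall>x. x \<noteq> b \<longrightarrow> mu z x = z)"

definition AVL :: "'a \<Rightarrow> 'a \<Rightarrow> ('a \<Rightarrow> 'a \<Rightarrow> 'a) \<Rightarrow> ('a \<Rightarrow> 'a) \<Rightarrow> bool"
  where "AVL z b mu iv \<longleftrightarrow> (\<forall>x. iv x = b \<longrightarrow> mu z x = x)"

definition CIL :: "'a \<Rightarrow> 'a \<Rightarrow> 'a \<Rightarrow> ('a \<Rightarrow> 'a \<Rightarrow> 'a) \<Rightarrow> ('a \<Rightarrow> 'a) \<Rightarrow> bool"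
  where "CIL z e b mu iv \<longleftrightarrow> (\<forall>x. x \<noteq> z \<and> x \<noteq> b \<longrightarrow> mu x (iv x) = e)"

end

theory Submission
  imports Defs
begin

lemma Md_conj: "Md_bot z e b ad mu ng iv \<Longrightarrow> (\<forall>x y w. ad (ad x y) w = ad x (ad y w)) \<and>
    (\<forall>x y. ad x y = ad y x) \<and>
    (\<forall>x. ad x z = x) \<and>
    (\<forall>x. ad x (ng x) = mu z x) \<and>
    (\<forall>x y w. mu (mu x y) w = mu x (mu y w)) \<and>
    (\<forall>x y. mu x y = mu y x) \<and>
    (\<forall>x. mu e x = x) \<and>
    (\<forall>x y w. mu x (ad y w) = ad (mu x y) (mu x w)) \<and>
    (\<forall>x. ng (ng x) = x) \<and>
    (\<forall>x. mu z (mu x x) = mu z x) \<and>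
    (\<forall>x. iv (iv x) = ad x (mu z (iv x))) \<and>
    (\<forall>x. mu x (iv x) = ad e (mu z (iv x))) \<and>
    (\<forall>x y. iv (mu x y) = mu (iv x) (iv y)) \<and>
    iv e = e \<and>
    iv z = b \<and>
    (\<forall>x. ad x b = b) \<and>
    (\<forall>x. mu x b = b)"
  unfolding Md_bot_def by assumption
lemmas Md_Aas = conjunct1[OF Md_conj, rule_format]
lemmas Md_AC = conjunct1[OF conjunct2[OF Md_conj], rule_format]
lemmas Md_Az = conjunct1[OF conjunct2[OF conjunct2[OF Md_conj]], rule_format]
lemmas Md_Ang = conjunct1[OF conjunct2[OF conjunct2[OF conjunct2[OF Md_conj]]], rule_format]
lemmas Md_As = conjunct1[OF conjunct2[OF conjunct2[OF conjunct2[OF conjunct2[OF Md_conj]]]], rule_format]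
lemmas Md_C = conjunct1[OF conjunct2[OF conjunct2[OF conjunct2[OF conjunct2[OF conjunct2[OF Md_conj]]]]], rule_format]
lemmas Md_U = conjunct1[OF conjunct2[OF conjunct2[OF conjunct2[OF conjunct2[OF conjunct2[OF conjunct2[OF Md_conj]]]]]], rule_format]
lemmas Md_D = conjunct1[OF conjunct2[OF conjunct2[OF conjunct2[OF conjunct2[OF conjunct2[OF conjunct2[OF conjunct2[OF Md_conj]]]]]]], rule_format]
lemmas Md_NN = conjunct1[OF conjunct2[OF conjunct2[OF conjunct2[OF conjunct2[OF conjunct2[OF conjunct2[OF conjunct2[OF conjunct2[OF Md_conj]]]]]]]], rule_format]
lemmas Md_S = conjunct1[OF conjunct2[OF conjunct2[OF conjunct2[OF conjunct2[OF conjunct2[OF conjunct2[OF conjunct2[OF conjunct2[OF conjunct2[OF Md_conj]]]]]]]]], rule_format]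
lemmas Md_II = conjunct1[OF conjunct2[OF conjunct2[OF conjunct2[OF conjunct2[OF conjunct2[OF conjunct2[OF conjunct2[OF conjunct2[OF conjunct2[OF conjunct2[OF Md_conj]]]]]]]]]], rule_format]
lemmas Md_I = conjunct1[OF conjunct2[OF conjunct2[OF conjunct2[OF conjunct2[OF conjunct2[OF conjunct2[OF conjunct2[OF conjunct2[OF conjunct2[OF conjunct2[OF conjunct2[OF Md_conj]]]]]]]]]]], rule_format]
lemmas Md_IM = conjunct1[OF conjunct2[OF conjunct2[OF conjunct2[OF conjunct2[OF conjunct2[OF conjunct2[OF conjunct2[OF conjunct2[OF conjunct2[OF conjunct2[OF conjunct2[OF conjunct2[OF Md_conj]]]]]]]]]]]], rule_format]
lemmas Md_I1 = conjunct1[OF conjunct2[OF conjunct2[OF conjunct2[OF conjunct2[OF conjunct2[OF conjunct2[OF conjunct2[OF conjunct2[OF conjunct2[OF conjunct2[OF conjunct2[OF conjunct2[OF conjunct2[OF Md_conj]]]]]]]]]]]]], rule_format]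
lemmas Md_I0 = conjunct1[OF conjunct2[OF conjunct2[OF conjunct2[OF conjunct2[OF conjunct2[OF conjunct2[OF conjunct2[OF conjunct2[OF conjunct2[OF conjunct2[OF conjunct2[OF conjunct2[OF conjunct2[OF conjunct2[OF Md_conj]]]]]]]]]]]]]], rule_format]
lemmas Md_AB = conjunct1[OF conjunct2[OF conjunct2[OF conjunct2[OF conjunct2[OF conjunct2[OF conjunct2[OF conjunct2[OF conjunct2[OF conjunct2[OF conjunct2[OF conjunct2[OF conjunct2[OF conjunct2[OF conjunct2[OF conjunct2[OF Md_conj]]]]]]]]]]]]]]], rule_format]
lemmas Md_MB = conjunct2[OF conjunct2[OF conjunct2[OF conjunct2[OF conjunct2[OF conjunct2[OF conjunct2[OF conjunct2[OF conjunct2[OF conjunct2[OF conjunct2[OF conjunct2[OF conjunct2[OF conjunct2[OF conjunct2[OF conjunct2[OF Md_conj]]]]]]]]]]]]]]], rule_format]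

lemma zz: assumes M: "Md_bot z e b ad mu ng iv" shows "mu z z = z"
proof -
  note A = Md_Ang[OF M] and U = Md_U[OF M] and C = Md_C[OF M] and Z = Md_Az[OF M] and N = Md_NN[OF M] and D = Md_D[OF M] and AC = Md_AC[OF M]
  have z1: "mu z e = z" using U[of z] C[of z e] by simp
  have e1: "ad e (ng e) = z" using A z1 by simp
  have "ad (ng e) (ng (ng e)) = mu z (ng e)" using A by blast
  hence "ad (ng e) e = mu z (ng e)" using N[of e] by simp
  hence zm: "mu z (ng e) = z" using e1 AC[of e "ng e"] by simp
  have "mu z z = mu z (ad e (ng e))" using e1 by simp
  also have "\<dots> = ad (mu z e) (mu z (ng e))" using D by blast
  also have "\<dots> = z" using z1 zm Z by simp
  finally show ?thesis .
qed

lemma ivb: assumes M: "Md_bot z e b ad mu ng iv" shows "iv b = b"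
proof -
  have "iv (iv z) = ad z (mu z (iv z))" "iv z = b" "mu z b = b" "ad z b = b"
    using Md_II[OF M] Md_I0[OF M] Md_MB[OF M] Md_AB[OF M] by blast+
  thus ?thesis by simp
qed

lemma p1: assumes M: "Md_bot z e b ad mu ng iv" and NV: "NVL z b mu"
  and h: "mu x y = b" "x \<noteq> b" shows "y = b"
proof (rule ccontr)
  assume y: "y \<noteq> b"
  note As = Md_As[OF M] and Z = Md_Az[OF M] and B = Md_AB[OF M] and MB = Md_MB[OF M]
  have "mu z x = z" "mu z y = z" using NV h y unfolding NVL_def by auto
  hence "mu z (mu x y) = z" using As[of z x y] by simp
  hence "z = b" using h MB by simp
  hence "x = b" using Z[of x] B[of x] by simp
  thus False using h by simp
qed

lemma p2: assumes M: "Md_bot z e b ad mu ng iv" and NV: "NVL z b mu"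
  and h: "iv x \<noteq> b" shows "mu z x = z"
proof -
  have "x \<noteq> b" using ivb[OF M] h by auto
  thus ?thesis using NV unfolding NVL_def by auto
qed

lemma p3: assumes M: "Md_bot z e b ad mu ng iv" and NV: "NVL z b mu" and AV: "AVL z b mu iv"
  shows "CIL z e b mu iv"
  unfolding CIL_def
proof (intro allI impI)
  fix x assume h: "x \<noteq> z \<and> x \<noteq> b"
  note I = Md_I[OF M] and Z = Md_Az[OF M]
  have "iv x \<noteq> b"
  proof
    assume "iv x = b"
    hence "mu z x = x" using AV unfolding AVL_def by auto
    moreover have "mu z x = z" using NV h unfolding NVL_def by auto
    ultimately show False using h by simp
  qed
  hence "mu z (iv x) = z" using NV unfolding NVL_def by auto
  thus "mu x (iv x) = e" using I[of x] Z[of e] by simp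
qed

lemma p4: assumes M: "Md_bot z e b ad mu ng iv" and CI: "CIL z e b mu iv"
  shows "NVL z b mu"
  unfolding NVL_def
proof (intro allI impI)
  fix x assume h: "x \<noteq> b"
  note As = Md_As[OF M] and U = Md_U[OF M] and C = Md_C[OF M] and S = Md_S[OF M]
  show "mu z x = z"
  proof (cases "x = z")
    case True thus ?thesis using zz[OF M] by simp
  next
    case False
    hence xi: "mu x (iv x) = e" using CI h unfolding CIL_def by auto
    have "mu z x = mu (mu z x) e" using U[of "mu z x"] C[of e "mu z x"] by simp
    also have "\<dots> = mu (mu z x) (mu x (iv x))" using xi by simp
    also have "\<dots> = mu (mu z (mu x x)) (iv x)" by (simp only: As)
    also have "\<dots> = mu (mu z x) (iv x)" using S by simp
    also have "\<dots> = mu z e" using As[of z x "iv x"] xi by simp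
    also have "\<dots> = z" using U[of z] C[of z e] by simp
    finally show ?thesis .
  qed
qed

lemma p5: assumes M: "Md_bot z e b ad mu ng iv" and CI: "CIL z e b mu iv"
  shows "AVL z b mu iv"
  unfolding AVL_def
proof (intro allI impI)
  fix x assume h: "iv x = b"
  note U = Md_U[OF M] and C = Md_C[OF M] and MB = Md_MB[OF M]
  show "mu z x = x"
  proof (cases "x = z \<or> x = b")
    case True thus ?thesis using zz[OF M] MB by auto
  next
    case False
    hence "mu x (iv x) = e" using CI unfolding CIL_def by auto
    hence "e = b" using h MB by simp
    hence "x = b" using U[of x] C[of b x] MB[of x] by simp
    thus ?thesis using False by simp
  qed
qed

theorem proposition2p6:
  shows "(\<forall>(z::'a) e b ad mu ng iv. Md_bot z e b ad mu ng iv \<and> NVL z b mu \<longrightarrow>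
            (\<forall>x y. mu x y = b \<and> x \<noteq> b \<longrightarrow> y = b))
    \<and> (\<forall>(z::'a) e b ad mu ng iv. Md_bot z e b ad mu ng iv \<and> NVL z b mu \<longrightarrow>
            (\<forall>x. iv x \<noteq> b \<longrightarrow> mu z x = z))
    \<and> (\<forall>(z::'a) e b ad mu ng iv. Md_bot z e b ad mu ng iv \<and> NVL z b mu \<and> AVL z b mu iv \<longrightarrow>
            CIL z e b mu iv)
    \<and> (\<forall>(z::'a) e b ad mu ng iv. Md_bot z e b ad mu ng iv \<and> CIL z e b mu iv \<longrightarrow>
            NVL z b mu)
    \<and> (\<forall>(z::'a) e b ad mu ng iv. Md_bot z e b ad mu ng iv \<and> CIL z e b mu iv \<longrightarrow>
            AVL z b mu iv)"
  apply (intro conjI allI impI)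
      apply (erule conjE, erule conjE, rule p1, assumption+)
     apply (erule conjE, rule p2, assumption+)
    apply (elim conjE, rule p3, assumption+)
   apply (elim conjE, rule p4, assumption+)
  apply (elim conjE, rule p5, assumption+)
  done

end
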